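(* For all $P,Q\in\Gamma_n$, $$0\le M_{SA}(P\|Q)\le \tfrac13 M_{SH}(P\|Q)\qquad\text{and}\qquad 0\le \xi_{SA}(P\|Q)\le \tfrac13\xi_{SH}(P\|Q).$$
   Context: $\Gamma_n=\{P=(p_1,\dots,p_n): p_i>0,\ \sum_i p_i=1\}$, $n\ge2$. For $f:(0,\infty)\to\mathbb{R}$, $C_f(P\|Q)=\sum_{i=1}^n q_i f(p_i/q_i)$; for differentiable $f$, $E_f(P\|Q)=\sum_{i=1}^n (p_i-q_i) f'(p_i/q_i)$ and $\xi_f=E_f-C_f$. With $f_{SA}(x)=\sqrt{(x^2+1)/2}-\frac{x+1}{2}$ and $f_{SH}(x)=\sqrt{(x^2+1)/2}-\frac{2x}{x+1}$: $M_{SA}=C_{f_{SA}}=\sum_i\sqrt{(p_i^2+q_i^2)/2}-1$, $M_{SH}=C_{f_{SH}}=\sum_i\big(\sqrt{(p_i^2+q_i^2)/2}-\frac{2p_iq_i}{p_i+q_i}\big)$, $\xi_{SA}=\xi_{f_{SA}}$, $\xi_{SH}=\xi_{f_{SH}}$. *)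

theory Defs
  imports "HOL-Analysis.Analysis"
begin

definition Gamma :: "nat \<Rightarrow> (nat \<Rightarrow> real) set" where
  "Gamma n = {P. (\<forall>i<n. P i > 0) \<and> (\<Sum>i<n. P i) = 1}"

definition C_f :: "(real \<Rightarrow> real) \<Rightarrow> nat \<Rightarrow> (nat \<Rightarrow> real) \<Rightarrow> (nat \<Rightarrow> real) \<Rightarrow> real" where
  "C_f f n P Q = (\<Sum>i<n. Q i * f (P i / Q i))"

definition E_f :: "(real \<Rightarrow> real) \<Rightarrow> nat \<Rightarrow> (nat \<Rightarrow> real) \<Rightarrow> (nat \<Rightarrow> real) \<Rightarrow> real" where
  "E_f f n P Q = (\<Sum>i<n. (P i - Q i) * deriv f (P i / Q i))"

definition xi_f :: "(real \<Rightarrow> real) \<Rightarrow> nat \<Rightarrow> (nat \<Rightarrow> real) \<Rightarrow> (nat \<Rightarrow> real) \<Rightarrow> real" where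
  "xi_f f n P Q = E_f f n P Q - C_f f n P Q"

definition f_SA :: "real \<Rightarrow> real" where
  "f_SA x = sqrt ((x^2 + 1) / 2) - (x + 1) / 2"

definition f_SH :: "real \<Rightarrow> real" where
  "f_SH x = sqrt ((x^2 + 1) / 2) - 2 * x / (x + 1)"

definition M_SA where "M_SA = C_f f_SA"
definition M_SH where "M_SH = C_f f_SH"
definition xi_SA where "xi_SA = xi_f f_SA"
definition xi_SH where "xi_SH = xi_f f_SH"

end

theory Submission
  imports Defs
begin

lemma deriv_SA:
  assumes "x > 0"
  shows "deriv f_SA x = x / (2 * sqrt ((x^2+1)/2)) - 1/2"
proof -
  have e: "f_SA = (\<lambda>x. sqrt ((x^2 + 1) / 2) - (x + 1) / 2)" by (rule ext, simp add: f_SA_def)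
  have "((\<lambda>x. sqrt ((x^2 + 1) / 2) - (x + 1) / 2) has_real_derivative x / (2 * sqrt ((x^2+1)/2)) - 1/2) (at x)"
    using assms apply (auto intro!: derivative_eq_intros simp: field_simps power2_eq_square add_pos_pos)
    using mult_pos_pos[OF assms assms] by linarith+
  then show ?thesis unfolding e by (rule DERIV_imp_deriv)
qed

lemma deriv_SH:
  assumes "x > 0"
  shows "deriv f_SH x = x / (2 * sqrt ((x^2+1)/2)) - 2/(x+1)^2"
proof -
  have e: "f_SH = (\<lambda>x. sqrt ((x^2 + 1) / 2) - 2 * x / (x + 1))" by (rule ext, simp add: f_SH_def)
  have "((\<lambda>x. sqrt ((x^2 + 1) / 2) - 2 * x / (x + 1)) has_real_derivative x / (2 * sqrt ((x^2+1)/2)) - 2/(x+1)^2) (at x)"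
    using assms apply (auto intro!: derivative_eq_intros simp: field_simps power2_eq_square add_pos_pos)
    using mult_pos_pos[OF assms assms] by linarith+
  then show ?thesis unfolding e by (rule DERIV_imp_deriv)
qed

lemma ptA:
  fixes x s :: real assumes x: "x > 0" and s: "s > 0" "s^2 = (x^2+1)/2"
  shows "(x+1)/2 \<le> s"
proof -
  have e: "((x+1)/2)^2 = (x^2+1)/2 - ((x-1)/2)^2" by (simp add: power2_eq_square algebra_simps add_divide_distrib diff_divide_distrib)
  have "((x+1)/2)^2 \<le> s^2" unfolding e s(2) using zero_le_power2[of "(x-1)/2"] by linarith
  moreover have "0 \<le> s" using s(1) by simp
  ultimately show ?thesis by (rule power2_le_imp_le)
qed

lemma ptB:
  fixes x s :: real assumes x: "x > 0" and s: "s > 0" "s^2 = (x^2+1)/2"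
  shows "3*(s-(x+1)/2) \<le> s - 2*x/(x+1)"
proof -
  have s2: "2* s^2 = x^2+1" using s(2) by simp
  have a: "(4*(s*(x+1)))^2 = 8*(2* s^2)*(x+1)^2" by (simp add: power_mult_distrib)
  have id: "(3*x^2+2*x+3)^2 - (4*(s*(x+1)))^2 = ((x-1)^2)^2"
    unfolding a s2 by (simp add: power2_eq_square algebra_simps)
  then have "(4*(s*(x+1)))^2 \<le> (3*x^2+2*x+3)^2" using zero_le_power2[of "(x-1)^2"] by linarith
  moreover have "0 \<le> 3*x^2+2*x+3" using x zero_le_power2[of x] by linarith
  ultimately have h: "4*(s*(x+1)) \<le> 3*x^2+2*x+3"
    by (rule power2_le_imp_le)
  have "s - 2*x/(x+1) - 3*(s-(x+1)/2) = (3*x^2+2*x+3 - 4*(s*(x+1))) / (2*(x+1))"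
    using x by (simp add: field_simps power2_eq_square)
  also have "... \<ge> 0" using h x by simp
  finally show ?thesis by linarith
qed

lemma numid:
  fixes x s :: real assumes s: "s > 0" "s^2 = (x^2+1)/2"
  shows "(x-1)*(x/(2* s)) - s = -(x+1)/(2* s)"
proof -
  have s2: "2* s^2 = x^2+1" using s(2) by simp
  have "(x-1)*(x/(2* s)) - s = ((x-1)*x - 2* s^2)/(2* s)" using s(1) by (simp add: field_simps power2_eq_square)
  also have "(x-1)*x - 2* s^2 = -(x+1)" unfolding s2 by (simp add: power2_eq_square algebra_simps)
  finally show ?thesis by simp
qed

lemma ptC:
  fixes x s :: real assumes x: "x > 0" and s: "s > 0" "s^2 = (x^2+1)/2"
  shows "(x-1)*(x/(2* s) - 1/2) - (s - (x+1)/2) = 1 - (x+1)/(2* s)"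
    and "0 \<le> 1 - (x+1)/(2* s)"
proof -
  have "(x-1)*(x/(2* s) - 1/2) - (s - (x+1)/2) = ((x-1)*(x/(2* s)) - s) + 1"
    by (simp add: algebra_simps) (simp add: field_simps)
  then show "(x-1)*(x/(2* s) - 1/2) - (s - (x+1)/2) = 1 - (x+1)/(2* s)"
    using numid[OF s] minus_divide_left[of "x+1" "2* s"] by linarith
  have "(x+1)/(2* s) \<le> 1" using ptA[OF x s] s(1) by (simp add: pos_divide_le_eq)
  then show "0 \<le> 1 - (x+1)/(2* s)" by simp
qed

lemma ptD:
  fixes x s :: real assumes x: "x > 0" and s: "s > 0" "s^2 = (x^2+1)/2"
  shows "3*((x-1)*(x/(2* s) - 1/2) - (s - (x+1)/2)) \<le> (x-1)*(x/(2* s) - 2/(x+1)^2) - (s - 2*x/(x+1))"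
proof -
  have x1: "x + 1 > 0" using x by simp
  have "(x-1)*(x/(2* s) - 2/(x+1)^2) - (s - 2*x/(x+1)) = ((x-1)*(x/(2* s)) - s) + (2*x/(x+1) - 2*(x-1)/(x+1)^2)"
    by (simp add: algebra_simps)
  also have "2*x/(x+1) - 2*(x-1)/(x+1)^2 = 2*(x^2+1)/(x+1)^2"
  proof -
    have nz: "x + 1 \<noteq> 0" "1 + x \<noteq> 0" using x1 by auto
    have e: "2*x/(x+1) = (2*x*(x+1))/(x+1)^2" using nz by (simp add: power2_eq_square)
    show ?thesis unfolding e diff_divide_distrib[symmetric]
      by (rule arg_cong[where f="\<lambda>u. u/(x+1)^2"]) (simp add: algebra_simps power2_eq_square)
  qed
  also have "2*(x^2+1) = 4* s^2" using s(2) by simp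
  finally have hsh: "(x-1)*(x/(2* s) - 2/(x+1)^2) - (s - 2*x/(x+1)) = -(x+1)/(2* s) + 4* s^2/(x+1)^2"
    using numid[OF s] minus_divide_left[of "x+1" "2* s"] by linarith
  define t where "t = (x+1)/s"
  have t: "t > 0" using x1 s(1) by (simp add: t_def)
  have e1: "4* s^2/(x+1)^2 = 4/t^2" by (simp add: t_def power_divide)
  have e2: "(x+1)/(2* s) = t/2" by (simp add: t_def)
  have e3: "-(x+1)/(2 * s) = -(t/2)" by (simp only: minus_divide_left[symmetric] e2)
  have "0 \<le> (t+1)*(t-2)^2/t^2" using t by simp
  also have "(t+1)*(t-2)^2/t^2 = t + 4/t^2 - 3" using t by (simp add: field_simps power2_eq_square)
  finally have "0 \<le> t + 4/t^2 - 3" .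
  then show ?thesis unfolding hsh ptC(1)[OF x s] e1 e2 e3 by (simp only: right_diff_distrib mult_1_right; linarith)
qed

lemma pw:
  fixes x :: real assumes x: "x > 0"
  shows "0 \<le> f_SA x \<and> 3 * f_SA x \<le> f_SH x \<and> 0 \<le> (x-1) * deriv f_SA x - f_SA x
     \<and> 3 * ((x-1) * deriv f_SA x - f_SA x) \<le> (x-1) * deriv f_SH x - f_SH x"
proof -
  define s where "s = sqrt ((x^2+1)/2)"
  have xp: "x^2+1 > 0" using zero_le_power2[of x] by linarith
  have sp: "s > 0" unfolding s_def using xp by simp
  have s2: "s^2 = (x^2+1)/2" unfolding s_def using xp by simp
  have fa: "f_SA x = s - (x+1)/2" by (simp add: f_SA_def s_def)
  have fh: "f_SH x = s - 2*x/(x+1)" by (simp add: f_SH_def s_def)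
  have da: "deriv f_SA x = x/(2 * s) - 1/2" using deriv_SA[OF x] by (simp add: s_def)
  have dh: "deriv f_SH x = x/(2 * s) - 2/(x+1)^2" using deriv_SH[OF x] by (simp add: s_def)
  show ?thesis unfolding fa fh da dh
    using ptA[OF x sp s2] ptB[OF x sp s2] ptC[OF x sp s2] ptD[OF x sp s2] by linarith
qed

lemma xi_sum:
  assumes "\<And>i. i < n \<Longrightarrow> Q i > 0"
  shows "xi_f f n P Q = (\<Sum>i<n. Q i * ((P i / Q i - 1) * deriv f (P i / Q i) - f (P i / Q i)))"
  unfolding xi_f_def E_f_def C_f_def sum_subtractf[symmetric]
proof (rule sum.cong)
  fix i assume "i \<in> {..<n}"
  then have q: "Q i > 0" using assms by simp
  have "Q i * (P i / Q i - 1) = P i - Q i" using q by (simp add: field_simps)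
  then show "(P i - Q i) * deriv f (P i / Q i) - Q i * f (P i / Q i) =
    Q i * ((P i / Q i - 1) * deriv f (P i / Q i) - f (P i / Q i))"
    by (metis right_diff_distrib mult.assoc)
qed simp

lemma aux3:
  fixes q a b :: real assumes "q * (3 * a) \<le> q * b" shows "q * a \<le> q * b / 3"
proof -
  have "q * (3 * a) = 3 * (q * a)" by simp
  then show ?thesis using assms by linarith
qed

theorem proposition5p1:
  fixes n :: nat and P Q :: "nat \<Rightarrow> real"
  assumes "n \<ge> 2" and "P \<in> Gamma n" and "Q \<in> Gamma n"
  shows "0 \<le> M_SA n P Q \<and> M_SA n P Q \<le> M_SH n P Q / 3
       \<and> 0 \<le> xi_SA n P Q \<and> xi_SA n P Q \<le> xi_SH n P Q / 3"
proof -
  have p: "\<And>i. i < n \<Longrightarrow> P i > 0" and q: "\<And>i. i < n \<Longrightarrow> Q i > 0"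
    using assms(2,3) by (auto simp: Gamma_def)
  have x: "\<And>i. i < n \<Longrightarrow> P i / Q i > 0" using p q by simp
  note W = pw[OF x]
  have 1: "0 \<le> M_SA n P Q" unfolding M_SA_def C_f_def
  proof (rule sum_nonneg)
    fix i assume "i \<in> {..<n}"
    then have i: "i < n" by simp
    show "0 \<le> Q i * f_SA (P i / Q i)" using W[OF i] q[OF i] by (intro mult_nonneg_nonneg) auto
  qed
  have 2: "M_SA n P Q \<le> M_SH n P Q / 3" unfolding M_SA_def M_SH_def C_f_def sum_divide_distrib
  proof (rule sum_mono)
    fix i assume "i \<in> {..<n}"
    then have i: "i < n" by simp
    have "Q i * (3 * f_SA (P i / Q i)) \<le> Q i * f_SH (P i / Q i)"
      using W[OF i] q[OF i] by (intro mult_left_mono) auto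
    then show "Q i * f_SA (P i / Q i) \<le> Q i * f_SH (P i / Q i) / 3" by simp
  qed
  have ea: "xi_SA n P Q = (\<Sum>i<n. Q i * ((P i / Q i - 1) * deriv f_SA (P i / Q i) - f_SA (P i / Q i)))"
    unfolding xi_SA_def by (rule xi_sum[OF q])
  have eh: "xi_SH n P Q = (\<Sum>i<n. Q i * ((P i / Q i - 1) * deriv f_SH (P i / Q i) - f_SH (P i / Q i)))"
    unfolding xi_SH_def by (rule xi_sum[OF q])
  have 3: "0 \<le> xi_SA n P Q" unfolding ea
  proof (rule sum_nonneg)
    fix i assume "i \<in> {..<n}"
    then have i: "i < n" by simp
    let ?x = "P i / Q i"
    show "0 \<le> Q i * ((?x - 1) * deriv f_SA ?x - f_SA ?x)" using W[OF i] q[OF i] by (intro mult_nonneg_nonneg) auto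
  qed
  have 4: "xi_SA n P Q \<le> xi_SH n P Q / 3" unfolding ea eh sum_divide_distrib
  proof (rule sum_mono)
    fix i assume "i \<in> {..<n}"
    then have i: "i < n" by simp
    let ?x = "P i / Q i"
    have "Q i * (3 * ((?x - 1) * deriv f_SA ?x - f_SA ?x)) \<le> Q i * ((?x - 1) * deriv f_SH ?x - f_SH ?x)"
      using W[OF i] q[OF i] by (intro mult_left_mono) auto
    then show "Q i * ((?x - 1) * deriv f_SA ?x - f_SA ?x) \<le> Q i * ((?x - 1) * deriv f_SH ?x - f_SH ?x) / 3" by (rule aux3)
  qed
  show ?thesis using 1 2 3 4 by blast
qed

end
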